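(* Let $G$ be a finite abelian group and $H$ a proper subgroup of $G$. Let $\mathcal P=P_0\mid P_1\mid\cdots\mid P_M$ be a partition of $H$, and let its dual partition (a partition of $\widehat H$) be $\widehat{\mathcal P}=Q_0\mid Q_1\mid\cdots\mid Q_L$, indexed so that $Q_0=\{\varepsilon_H\}$. Let $K_{\ell,m}$ ($\ell\in\{0,\dots,L\}$, $m\in\{0,\dots,M\}$) be the Krawtchouk coefficients of $(\mathcal P,\widehat{\mathcal P})$. Put $P_{-1}:=G\setminus H$ and $\mathcal P'=P_{-1}\mid P_0\mid\cdots\mid P_M$, a partition of $G$. Then the dual partition of $\mathcal P'$ is $\widehat{\mathcal P'}=Q'_{-1}\mid Q'_0\mid Q'_1\mid\cdots\mid Q'_L$, where $Q'_{-1}=H^{\perp}\setminus\{\varepsilon_G\}$, $Q'_0=\{\varepsilon_G\}$ and $Q'_\ell=\{\chi\in\widehat G\setminus H^\perp : \chi|_H\in Q_\ell\}$ for $\ell=1,\dots,L$ (all empty sets being discarded). The Krawtchouk coefficients $K'_{\ell,m}$ ($\ell\in\{-1,\dots,L\}$, $m\in\{-1,\dots,M\}$) of $(\mathcal P',\widehat{\mathcal P'})$ are: $K'_{-1,-1}=-|H|$, $K'_{-1,m}=|P_m|$ for $m\ge 0$; $K'_{0,-1}=|P_{-1}|$, $K'_{0,m}=K_{0,m}$ for $m\ge0$; and for $\ell\ge1$: $K'_{\ell,-1}=0$, $K'_{\ell,m}=K_{\ell,m}$ for $m\ge0$. Consequently, if $\mathcal P$ is reflexive, then so is $\mathcal 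P'$.
   Context: For a finite abelian group $G$, $\widehat G=\mathrm{Hom}(G,\mathbb C^* )$ is its character group, with zero element the principal character $\varepsilon_G\equiv1$; $\chi|_H$ denotes restriction, and $H^\perp=\{\chi\in\widehat G:\chi(h)=1\ \forall h\in H\}$. For a partition $\mathcal P=P_1\mid\cdots\mid P_M$ of $G$, its dual partition $\widehat{\mathcal P}$ is the partition of $\widehat G$ given by $\chi\sim\chi'$ iff $\sum_{g\in P_m}\chi(g)=\sum_{g\in P_m}\chi'(g)$ for all $m$. (The singleton $\{\varepsilon\}$ is always a block of a dual partition.) If $\widehat{\mathcal P}=Q_1\mid\cdots\mid Q_L$, the Krawtchouk coefficients of $(\mathcal P,\widehat{\mathcal P})$ are $K_{\ell,m}=\sum_{g\in P_m}\chi(g)$ for any $\chi\in Q_\ell$ (independent of the choice of $\chi$). $\mathcal P$ is reflexive if its bidual (a partition of $\widehat{\widehat G}\cong G$ via the canonical isomorphism) equals $\mathcal P$; equivalently, $\mathcal P$ and $\widehat{\mathcal P}$ have the same number of blocks. *)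

theory Defs
  imports "HOL-Algebra.Group" "HOL-Library.Disjoint_Sets" Complex_Main
begin

(* Characters of a (finite abelian) group G: homomorphisms carrier G -> C^*,
   normalised to be 0 outside the carrier so that equality of characters is
   equality of functions. *)
definition chars :: "('a, 'b) monoid_scheme \<Rightarrow> ('a \<Rightarrow> complex) set" where
  "chars G = {\<chi>. (\<forall>x\<in>carrier G. \<forall>y\<in>carrier G. \<chi> (x \<otimes>\<^bsub>G\<^esub> y) = \<chi> x * \<chi> y)
                  \<and> (\<forall>x\<in>carrier G. \<chi> x \<noteq> 0)
                  \<and> (\<forall>x. x \<notin> carrier G \<longrightarrow> \<chi> x = 0)}"

definition principal :: "('a, 'b) monoid_scheme \<Rightarrow> 'a \<Rightarrow> complex" where
  "principal G = (\<lambda>x. if x \<in> carrier G then 1 else 0)"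

definition restr :: "('a \<Rightarrow> complex) \<Rightarrow> 'a set \<Rightarrow> 'a \<Rightarrow> complex" where
  "restr \<chi> H = (\<lambda>x. if x \<in> H then \<chi> x else 0)"

definition annihilator :: "('a, 'b) monoid_scheme \<Rightarrow> 'a set \<Rightarrow> ('a \<Rightarrow> complex) set" where
  "annihilator G H = {\<chi> \<in> chars G. \<forall>h\<in>H. \<chi> h = 1}"

definition dual_part :: "('a, 'b) monoid_scheme \<Rightarrow> 'a set set \<Rightarrow> ('a \<Rightarrow> complex) set set" where
  "dual_part G P = (\<lambda>\<chi>. {\<psi> \<in> chars G. \<forall>B\<in>P. sum \<psi> B = sum \<chi> B}) ` chars G"

definition kraw :: "('a \<Rightarrow> complex) set \<Rightarrow> 'a set \<Rightarrow> complex" where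
  "kraw Q B = sum (SOME \<chi>. \<chi> \<in> Q) B"

(* bidual partition, transported to G along the canonical isomorphism
   g |-> (chi |-> chi g):  g ~ g' iff sum_{chi in Q} chi g = sum_{chi in Q} chi g'
   for all blocks Q of the dual partition *)
definition bidual_part :: "('a, 'b) monoid_scheme \<Rightarrow> 'a set set \<Rightarrow> 'a set set" where
  "bidual_part G P = (\<lambda>g. {h \<in> carrier G. \<forall>Q\<in>dual_part G P.
        (\<Sum>\<chi>\<in>Q. \<chi> h) = (\<Sum>\<chi>\<in>Q. \<chi> g)}) ` carrier G"

definition reflexive_part :: "('a, 'b) monoid_scheme \<Rightarrow> 'a set set \<Rightarrow> bool" where
  "reflexive_part G P \<longleftrightarrow> bidual_part G P = P"

definition lift_block :: "('a, 'b) monoid_scheme \<Rightarrow> 'a set \<Rightarrow> ('a \<Rightarrow> complex) set \<Rightarrow> ('a \<Rightarrow> complex) set" where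
  "lift_block G H Q = {\<chi> \<in> chars G - annihilator G H. restr \<chi> H \<in> Q}"

end

theory Submission
  imports Defs "HOL-Algebra.Multiplicative_Group"
begin

lemma chars_upd: "chars (G\<lparr>carrier := H\<rparr>) = {\<chi>. (\<forall>x\<in>H. \<forall>y\<in>H. \<chi> (x \<otimes>\<^bsub>G\<^esub> y) = \<chi> x * \<chi> y)
                  \<and> (\<forall>x\<in>H. \<chi> x \<noteq> 0) \<and> (\<forall>x. x \<notin> H \<longrightarrow> \<chi> x = 0)}"
  by (simp add: chars_def)

lemma principal_upd: "principal (G\<lparr>carrier := H\<rparr>) = (\<lambda>x. if x \<in> H then 1 else 0)"
  by (simp add: principal_def)

lemma charsD:
  assumes "\<chi> \<in> chars G"
  shows "\<And>x y. x \<in> carrier G \<Longrightarrow> y \<in> carrier G \<Longrightarrow> \<chi> (x \<otimes>\<^bsub>G\<^esub> y) = \<chi> x * \<chi> y"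
    and "\<And>x. x \<in> carrier G \<Longrightarrow> \<chi> x \<noteq> 0"
    and "\<And>x. x \<notin> carrier G \<Longrightarrow> \<chi> x = 0"
  using assms by (auto simp: chars_def)

lemma chars_one:
  assumes "monoid G" "\<chi> \<in> chars G" shows "\<chi> \<one>\<^bsub>G\<^esub> = 1"
proof -
  have "\<chi> \<one>\<^bsub>G\<^esub> = \<chi> \<one>\<^bsub>G\<^esub> * \<chi> \<one>\<^bsub>G\<^esub>"
    using charsD(1)[OF assms(2), of "\<one>\<^bsub>G\<^esub>" "\<one>\<^bsub>G\<^esub>"] assms(1) by (simp add: monoid.one_closed)
  moreover have "\<chi> \<one>\<^bsub>G\<^esub> \<noteq> 0" using charsD(2)[OF assms(2)] assms(1) by (simp add: monoid.one_closed)
  ultimately show ?thesis by (metis mult_cancel_right1)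
qed

lemma chars_pow:
  assumes "monoid G" "\<chi> \<in> chars G" "x \<in> carrier G" shows "\<chi> (x [^]\<^bsub>G\<^esub> (n::nat)) = \<chi> x ^ n"
proof (induction n)
  case 0 then show ?case using chars_one[OF assms(1,2)] by simp
next
  case (Suc n)
  then show ?case using charsD(1)[OF assms(2)] assms by (simp add: monoid.nat_pow_Suc monoid.nat_pow_closed)
qed

lemma principal_chars: "monoid G \<Longrightarrow> principal G \<in> chars G"
  by (auto simp: chars_def principal_def monoid.m_closed)

lemma chars_prod: "\<chi> \<in> chars G \<Longrightarrow> \<psi> \<in> chars G \<Longrightarrow> (\<lambda>x. \<chi> x * \<psi> x) \<in> chars G"
  by (auto simp: chars_def)

lemma chars_inverse: "\<chi> \<in> chars G \<Longrightarrow> (\<lambda>x. inverse (\<chi> x)) \<in> chars G"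
  by (auto simp: chars_def)

lemma finite_chars:
  assumes "group G" "finite (carrier G)" shows "finite (chars G)"
proof -
  let ?n = "card (carrier G)"
  have n: "?n > 0" using assms by (metis card_gt_0_iff empty_iff group.is_monoid monoid.one_closed)
  have "chars G \<subseteq> {f. \<forall>x. (x \<in> carrier G \<longrightarrow> f x \<in> {z. z ^ ?n = 1}) \<and> (x \<notin> carrier G \<longrightarrow> f x = 0)}"
  proof safe
    fix f x assume f: "f \<in> chars G" and x: "x \<in> carrier G"
    have "f (x [^]\<^bsub>G\<^esub> ?n) = f x ^ ?n" by (rule chars_pow[OF group.is_monoid[OF assms(1)] f x])
    moreover have "x [^]\<^bsub>G\<^esub> ?n = \<one>\<^bsub>G\<^esub>" using group.pow_order_eq_1[OF assms(1) x] by (simp add: order_def)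
    ultimately show "f x ^ ?n = 1" using chars_one[OF group.is_monoid[OF assms(1)] f] by simp
  next
    fix f x assume "f \<in> chars G" "x \<notin> carrier G" then show "f x = 0" by (rule charsD(3))
  qed
  moreover have "finite {f. \<forall>x. (x \<in> carrier G \<longrightarrow> f x \<in> {z::complex. z ^ ?n = 1}) \<and> (x \<notin> carrier G \<longrightarrow> f x = 0)}"
    by (rule finite_set_of_finite_funs) (use assms n finite_roots_unity in auto)
  ultimately show ?thesis by (rule finite_subset)
qed

lemma (in group) sum_char_nonprincipal:
  assumes "finite (carrier G)" "\<chi> \<in> chars G" "\<chi> \<noteq> principal G"
  shows "sum \<chi> (carrier G) = 0"
proof -
  obtain x where x: "x \<in> carrier G" "\<chi> x \<noteq> 1"
  proof -
    have "\<exists>x\<in>carrier G. \<chi> x \<noteq> 1"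
    proof (rule ccontr)
      assume "\<not> ?thesis"
      then have "\<chi> = principal G" using charsD(3)[OF assms(2)] by (auto simp: principal_def fun_eq_iff)
      with assms(3) show False by simp
    qed
    then show ?thesis using that by blast
  qed
  have img: "(\<lambda>y. x \<otimes> y) ` carrier G = carrier G"
  proof
    show "(\<lambda>y. x \<otimes> y) ` carrier G \<subseteq> carrier G" using x by auto
    show "carrier G \<subseteq> (\<lambda>y. x \<otimes> y) ` carrier G"
    proof
      fix y assume y: "y \<in> carrier G"
      have "y = x \<otimes> (inv x \<otimes> y)" using x y by (simp add: m_assoc[symmetric])
      then show "y \<in> (\<lambda>y. x \<otimes> y) ` carrier G" using x y by blast
    qed
  qed
  have "sum \<chi> (carrier G) = sum \<chi> ((\<lambda>y. x \<otimes> y) ` carrier G)" using img by simp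
  also have "\<dots> = sum (\<lambda>y. \<chi> (x \<otimes> y)) (carrier G)"
    by (subst sum.reindex[OF inj_on_cmult[OF x(1)]]) simp
  also have "\<dots> = \<chi> x * sum \<chi> (carrier G)"
    by (simp add: sum_distrib_left charsD(1)[OF assms(2)] x)
  finally have "(1 - \<chi> x) * sum \<chi> (carrier G) = 0" by (simp add: algebra_simps)
  then show ?thesis using x(2) by simp
qed

lemma sum_principal: "finite A \<Longrightarrow> A \<subseteq> carrier G \<Longrightarrow> sum (principal G) A = of_nat (card A)"
  by (simp add: principal_def subset_iff)

lemma (in group) sub_pow_closed:
  assumes "subgroup H G" "h \<in> H" shows "h [^] (n::nat) \<in> H"
  by (induction n) (auto simp: subgroup.one_closed[OF assms(1)] subgroup.m_closed[OF assms(1)] assms(2))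

lemma (in group) sub_char_one:
  assumes "subgroup H G" "\<phi> \<in> chars (G\<lparr>carrier := H\<rparr>)"
  shows "\<phi> \<one> = 1"
proof -
  have m: "\<forall>x\<in>H. \<forall>y\<in>H. \<phi> (x \<otimes> y) = \<phi> x * \<phi> y" using assms(2) by (simp add: chars_upd)
  have "\<phi> \<one> = \<phi> \<one> * \<phi> \<one>" using m[rule_format, OF subgroup.one_closed[OF assms(1)] subgroup.one_closed[OF assms(1)]] by simp
  moreover have "\<phi> \<one> \<noteq> 0" using assms subgroup.one_closed[OF assms(1)] by (simp add: chars_upd)
  ultimately show ?thesis by (metis mult_cancel_right1)
qed

lemma (in group) sub_char_pow:
  assumes "subgroup H G" "\<phi> \<in> chars (G\<lparr>carrier := H\<rparr>)" "h \<in> H"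
  shows "\<phi> (h [^] (n::nat)) = \<phi> h ^ n"
proof (induction n)
  case 0 then show ?case using sub_char_one[OF assms(1,2)] by simp
next
  case (Suc n)
  have "h [^] Suc n = h [^] n \<otimes> h" by simp
  then show ?case using Suc assms sub_pow_closed[OF assms(1,3)] by (simp add: chars_upd)
qed

lemma (in comm_group) ext_step:
  assumes fin: "finite (carrier G)" and H: "subgroup H G" and phi: "\<phi> \<in> chars (G\<lparr>carrier := H\<rparr>)"
    and a: "a \<in> carrier G" "a \<notin> H"
    and n_def: "n = (LEAST n::nat. 0 < n \<and> a [^] n \<in> H)"
    and z: "z ^ n = \<phi> (a [^] n)"
  shows "\<exists>H' \<chi>. subgroup H' G \<and> H \<subseteq> H' \<and> a \<in> H' \<and> \<chi> \<in> chars (G\<lparr>carrier := H'\<rparr>)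
               \<and> (\<forall>h\<in>H. \<chi> h = \<phi> h) \<and> \<chi> a = z"
proof -
  have Hc: "H \<subseteq> carrier G" using H by (rule subgroup.subset)
  have ord: "a [^] card (carrier G) = \<one>" using pow_order_eq_1[OF a(1)] by (simp add: order_def)
  have cpos: "card (carrier G) > 0" using fin by (metis card_gt_0_iff empty_iff one_closed)
  have ex: "\<exists>n::nat. 0 < n \<and> a [^] n \<in> H"
    using ord cpos subgroup.one_closed[OF H] by (intro exI[of _ "card (carrier G)"]) simp
  have n: "0 < n" "a [^] n \<in> H" using LeastI_ex[OF ex] n_def by auto
  have nmin: "\<And>k::nat. 0 < k \<Longrightarrow> k < n \<Longrightarrow> a [^] k \<notin> H" using not_less_Least n_def by blast
  have phiH: "\<And>x y. x \<in> H \<Longrightarrow> y \<in> H \<Longrightarrow> \<phi> (x \<otimes> y) = \<phi> x * \<phi> y"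
    and phinz: "\<And>x. x \<in> H \<Longrightarrow> \<phi> x \<noteq> 0"
    using phi by (auto simp: chars_upd)
  have znz: "z \<noteq> 0" using z n phinz[OF n(2)] by (metis zero_power)
  define H' where "H' = {h \<otimes> a [^] k | h k. h \<in> H \<and> (k::nat) \<ge> 0}"
  have uniq: "h = h' \<and> k = k'" if "h \<in> H" "h' \<in> H" "k < n" "k' < n" "h \<otimes> a [^] k = h' \<otimes> a [^] k'"
    for h h' k k'
  proof -
    have aux: "h = h' \<and> k = k'" if "h \<in> H" "h' \<in> H" "k < n" "k' \<le> k" "h \<otimes> a [^] k = h' \<otimes> a [^] k'"
      for h h' k k'
    proof -
      have hc: "h \<in> carrier G" "h' \<in> carrier G" using that Hc by auto
      have "a [^] k = a [^] (k - k') \<otimes> a [^] k'" using nat_pow_mult[OF a(1)] that(4) by simp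
      then have "(h \<otimes> a [^] (k - k')) \<otimes> a [^] k' = h' \<otimes> a [^] k'" using that(5) hc a by (simp add: m_assoc)
      then have e: "h \<otimes> a [^] (k - k') = h'" using hc a by simp
      then have "a [^] (k - k') = inv h \<otimes> h'" using hc a by (simp add: inv_solve_left)
      moreover have "inv h \<otimes> h' \<in> H" using that H by (simp add: subgroup.m_closed subgroup.m_inv_closed)
      moreover have "k - k' < n" using that(3) by linarith
      ultimately have "k - k' = 0" using nmin[of "k - k'"] by (cases "k - k' = 0") auto
      then show ?thesis using e hc that(4) by simp
    qed
    show ?thesis
    proof (cases "k' \<le> k")
      case True then show ?thesis using aux that by blast
    next
      case False then have "k \<le> k'" by simp
      then have "h' = h \<and> k' = k" using aux[of h' h k' k] that by simp
      then show ?thesis by simp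
    qed
  qed
  have rep: "\<exists>h'. h' \<in> H \<and> h \<otimes> a [^] k = h' \<otimes> a [^] (k mod n) \<and> \<phi> h' = \<phi> h * \<phi> (a [^] n) ^ (k div n)"
    if "h \<in> H" for h k
  proof -
    let ?h' = "h \<otimes> (a [^] n) [^] (k div n)"
    have p: "(a [^] n) [^] (k div n) \<in> H" using sub_pow_closed[OF H n(2)] .
    have "a [^] k = (a [^] n) [^] (k div n) \<otimes> a [^] (k mod n)"
      using a(1) by (simp add: nat_pow_pow nat_pow_mult)
    then have "h \<otimes> a [^] k = ?h' \<otimes> a [^] (k mod n)" using that Hc p a by (simp add: m_assoc subsetD)
    moreover have "\<phi> ?h' = \<phi> h * \<phi> (a [^] n) ^ (k div n)"
      using phiH[OF that p] sub_char_pow[OF H phi n(2)] by simp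
    ultimately show ?thesis using that p subgroup.m_closed[OF H] by blast
  qed
  define \<chi> where "\<chi> x = (if x \<in> H' then (let r = SOME r. fst r \<in> H \<and> snd r < n \<and> x = fst r \<otimes> a [^] snd r
        in \<phi> (fst r) * z ^ snd r) else 0)" for x
  have key: "\<chi> (h \<otimes> a [^] k) = \<phi> h * z ^ k" if hH: "h \<in> H" for h k
  proof -
    obtain h' where h': "h' \<in> H" "h \<otimes> a [^] k = h' \<otimes> a [^] (k mod n)"
      "\<phi> h' = \<phi> h * \<phi> (a [^] n) ^ (k div n)" using rep[OF hH] by blast
    have inH': "h \<otimes> a [^] k \<in> H'" using hH unfolding H'_def by blast
    let ?P = "\<lambda>r. fst r \<in> H \<and> snd r < n \<and> h \<otimes> a [^] k = fst r \<otimes> a [^] snd r"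
    have P1: "?P (h', k mod n)" using h' n by simp
    then have P2: "?P (SOME r. ?P r)" by (rule someI)
    have "k mod n < n" using n by simp
    then have "fst (SOME r. ?P r) = h' \<and> snd (SOME r. ?P r) = k mod n"
      using uniq[of "fst (SOME r. ?P r)" h' "snd (SOME r. ?P r)" "k mod n"] h' P2 by simp
    then have "(SOME r. ?P r) = (h', k mod n)" by (simp add: prod_eq_iff)
    then have "\<chi> (h \<otimes> a [^] k) = \<phi> h' * z ^ (k mod n)" using inH' unfolding \<chi>_def by (simp add: Let_def)
    also have "\<dots> = \<phi> h * (z ^ n) ^ (k div n) * z ^ (k mod n)" using h'(3) z by simp
    also have "\<dots> = \<phi> h * z ^ (n * (k div n) + k mod n)" by (simp only: power_add power_mult mult.assoc)
    also have "n * (k div n) + k mod n = k" by simp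
    finally show ?thesis by simp
  qed
  have H'c: "H' \<subseteq> carrier G" unfolding H'_def using Hc a by auto
  have HH': "H \<subseteq> H'"
  proof
    fix h assume "h \<in> H" then have "h = h \<otimes> a [^] (0::nat)" using Hc by auto
    then show "h \<in> H'" using \<open>h \<in> H\<close> unfolding H'_def by blast
  qed
  have aH': "a = \<one> \<otimes> a [^] (1::nat)" using a by simp
  have aH'': "a \<in> H'" unfolding H'_def using aH' subgroup.one_closed[OF H] by blast
  have multH': "x \<otimes> y \<in> H' \<and> \<chi> (x \<otimes> y) = \<chi> x * \<chi> y" if xH: "x \<in> H'" and yH: "y \<in> H'" for x y
  proof -
    obtain h k where x: "h \<in> H" "x = h \<otimes> a [^] (k::nat)" using xH unfolding H'_def by blast
    obtain h' k' where y: "h' \<in> H" "y = h' \<otimes> a [^] (k'::nat)" using yH unfolding H'_def by blast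
    have hc: "h \<in> carrier G" "h' \<in> carrier G" using x y Hc by auto
    have e: "x \<otimes> y = (h \<otimes> h') \<otimes> a [^] (k + k')"
      using x y hc a by (simp add: m_ac nat_pow_mult[symmetric])
    have "h \<otimes> h' \<in> H" using subgroup.m_closed[OF H] x y by blast
    then have "x \<otimes> y \<in> H'" using e unfolding H'_def by blast
    moreover have "\<chi> (x \<otimes> y) = \<chi> x * \<chi> y"
      using e key[OF \<open>h \<otimes> h' \<in> H\<close>] key[OF x(1)] key[OF y(1)] x y phiH[OF x(1) y(1)]
      by (simp add: power_add mult_ac)
    ultimately show ?thesis by blast
  qed
  have subH': "subgroup H' G"
  proof (rule subgroupI)
    show "H' \<subseteq> carrier G" by fact
    show "H' \<noteq> {}" using aH'' by blast
    show "a \<otimes> b \<in> H'" if "a \<in> H'" "b \<in> H'" for a b using multH' that by blast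
    show "inv x \<in> H'" if xH: "x \<in> H'" for x
    proof -
      obtain h k where x: "h \<in> H" "x = h \<otimes> a [^] (k::nat)" using xH unfolding H'_def by blast
      have hc: "h \<in> carrier G" using x Hc by auto
      let ?m = "card (carrier G)"
      let ?y = "inv h \<otimes> a [^] (k * (?m - 1))"
      have "a [^] (k * (?m - 1)) \<otimes> a [^] k = a [^] (k * ?m)"
      proof -
        have "k * (?m - 1) + k = k * ?m" using cpos by (cases ?m) (auto simp: algebra_simps)
        then show ?thesis using a by (simp add: nat_pow_mult)
      qed
      also have "\<dots> = (a [^] ?m) [^] k" using a by (simp add: nat_pow_pow mult.commute)
      also have "\<dots> = \<one>" using ord by simp
      finally have "?y \<otimes> x = \<one>" using x hc a by (simp add: m_ac)
      then have "inv x = ?y" using x hc a by (intro inv_equality) auto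
      moreover have "inv h \<in> H" using subgroup.m_inv_closed[OF H x(1)] .
      ultimately show ?thesis unfolding H'_def by blast
    qed
  qed
  have chiC: "\<chi> \<in> chars (G\<lparr>carrier := H'\<rparr>)"
  proof -
    have "\<chi> x \<noteq> 0" if xH: "x \<in> H'" for x
    proof -
      obtain h k where x: "h \<in> H" "x = h \<otimes> a [^] (k::nat)" using xH unfolding H'_def by blast
      show ?thesis using key[OF x(1)] x phinz[OF x(1)] znz by simp
    qed
    moreover have "\<chi> x = 0" if "x \<notin> H'" for x using that unfolding \<chi>_def by simp
    ultimately show ?thesis using multH' by (auto simp: chars_upd)
  qed
  have "\<chi> h = \<phi> h" if "h \<in> H" for h
    using key[OF that, of 0] that Hc by (auto simp: subsetD)
  moreover have "\<chi> a = z" using key[OF subgroup.one_closed[OF H], of 1] aH' sub_char_one[OF H phi] by simp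
  ultimately show ?thesis using subH' HH' aH'' chiC by blast
qed

lemma complex_root_ex: "0 < n \<Longrightarrow> \<exists>z::complex. z ^ n = w"
proof -
  assume n: "0 < n"
  have "rcis (root n (cmod w)) (Arg w / real n) ^ n = w"
  proof -
    have e1: "root n (cmod w) ^ n = cmod w" using n by (simp add: real_root_pow_pos2)
    have e2: "real n * (Arg w / real n) = Arg w" using n by simp
    show ?thesis unfolding DeMoivre2 e1 e2 by (rule rcis_cmod_Arg)
  qed
  then show ?thesis by blast
qed

lemma (in comm_group) ext_all:
  assumes fin: "finite (carrier G)"
  shows "subgroup H G \<Longrightarrow> \<phi> \<in> chars (G\<lparr>carrier := H\<rparr>) \<Longrightarrow> \<exists>\<chi>\<in>chars G. \<forall>h\<in>H. \<chi> h = \<phi> h"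
proof (induction "card (carrier G - H)" arbitrary: H \<phi> rule: less_induct)
  case less
  show ?case
  proof (cases "H = carrier G")
    case True
    then have "\<phi> \<in> chars G" using less.prems(2) by (simp add: chars_upd chars_def)
    then show ?thesis by blast
  next
    case False
    then obtain a where a: "a \<in> carrier G" "a \<notin> H" using subgroup.subset[OF less.prems(1)] by blast
    define n where "n = (LEAST n::nat. 0 < n \<and> a [^] n \<in> H)"
    have ord: "a [^] card (carrier G) = \<one>" using pow_order_eq_1[OF a(1)] by (simp add: order_def)
    have cpos: "card (carrier G) > 0" using fin by (metis card_gt_0_iff empty_iff one_closed)
    have ex: "\<exists>n::nat. 0 < n \<and> a [^] n \<in> H"
      using ord cpos subgroup.one_closed[OF less.prems(1)] by (intro exI[of _ "card (carrier G)"]) simp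
    have "0 < n" using LeastI_ex[OF ex] n_def by auto
    then obtain z where z: "z ^ n = \<phi> (a [^] n)" using complex_root_ex by blast
    obtain H' \<chi> where H': "subgroup H' G" "H \<subseteq> H'" "a \<in> H'" "\<chi> \<in> chars (G\<lparr>carrier := H'\<rparr>)"
      "\<forall>h\<in>H. \<chi> h = \<phi> h"
      using ext_step[OF fin less.prems(1,2) a n_def z] by blast
    have "carrier G - H' \<subset> carrier G - H" using H'(2,3) a by blast
    then have "card (carrier G - H') < card (carrier G - H)" using fin by (intro psubset_card_mono) auto
    then obtain \<psi> where p: "\<psi> \<in> chars G" "\<forall>h\<in>H'. \<psi> h = \<chi> h" using less.hyps[OF _ H'(1,4)] by blast
    then have "\<forall>h\<in>H. \<psi> h = \<phi> h" using H'(2,5) by auto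
    then show ?thesis using p(1) by blast
  qed
qed

lemma (in comm_group) separate:
  assumes fin: "finite (carrier G)" and H: "subgroup H G" and g: "g \<in> carrier G" "g \<notin> H"
  shows "\<exists>\<psi>\<in>annihilator G H. \<psi> g \<noteq> 1"
proof -
  let ?\<phi> = "principal (G\<lparr>carrier := H\<rparr>)"
  have phi: "?\<phi> \<in> chars (G\<lparr>carrier := H\<rparr>)"
    by (simp add: chars_upd principal_upd subgroup.m_closed[OF H])
  define n where "n = (LEAST n::nat. 0 < n \<and> g [^] n \<in> H)"
  have ord: "g [^] card (carrier G) = \<one>" using pow_order_eq_1[OF g(1)] by (simp add: order_def)
  have cpos: "card (carrier G) > 0" using fin by (metis card_gt_0_iff empty_iff one_closed)
  have ex: "\<exists>n::nat. 0 < n \<and> g [^] n \<in> H"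
    using ord cpos subgroup.one_closed[OF H] by (intro exI[of _ "card (carrier G)"]) simp
  have n: "0 < n" "g [^] n \<in> H" using LeastI_ex[OF ex] n_def by auto
  have "n \<noteq> 1" using n g by auto
  with n have n2: "n \<ge> 2" by simp
  have "\<exists>z. z \<in> {z::complex. z ^ n = 1} - {1}"
  proof (rule ccontr)
    assume "\<not> ?thesis"
    then have "{z::complex. z ^ n = 1} \<subseteq> {1}" by blast
    then have "card {z::complex. z ^ n = 1} \<le> 1" using card_mono[of "{1::complex}" "{z::complex. z ^ n = 1}"] by simp
    with card_roots_unity_eq[OF n(1)] n2 show False by simp
  qed
  then obtain z :: complex where z: "z ^ n = 1" "z \<noteq> 1" by blast
  have zz: "z ^ n = ?\<phi> (g [^] n)" using z n by (simp add: principal_upd)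
  obtain H' \<chi> where H': "subgroup H' G" "H \<subseteq> H'" "g \<in> H'" "\<chi> \<in> chars (G\<lparr>carrier := H'\<rparr>)"
      "\<forall>h\<in>H. \<chi> h = ?\<phi> h" "\<chi> g = z"
    using ext_step[OF fin H phi g n_def zz] by blast
  obtain \<psi> where \<psi>: "\<psi> \<in> chars G" "\<forall>h\<in>H'. \<psi> h = \<chi> h" using ext_all[OF fin H'(1,4)] by blast
  have "\<psi> \<in> annihilator G H" using \<psi> H'(2,5) by (auto simp: annihilator_def principal_upd)
  moreover have "\<psi> g \<noteq> 1" using \<psi> H'(3,6) z by auto
  ultimately show ?thesis by blast
qed

lemma mult_inj: "\<chi>0 \<in> chars G \<Longrightarrow> inj_on (\<lambda>\<psi> y. \<chi>0 y * \<psi> y) (chars G)"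
proof (rule inj_onI)
  fix \<psi> \<psi>' assume c: "\<chi>0 \<in> chars G" "\<psi> \<in> chars G" "\<psi>' \<in> chars G"
    and e: "(\<lambda>y. \<chi>0 y * \<psi> y) = (\<lambda>y. \<chi>0 y * \<psi>' y)"
  show "\<psi> = \<psi>'"
  proof
    fix y show "\<psi> y = \<psi>' y"
    proof (cases "y \<in> carrier G")
      case True then show ?thesis using e charsD(2)[OF c(1) True] by (metis mult_left_cancel)
    next
      case False then show ?thesis using charsD(3)[OF c(2)] charsD(3)[OF c(3)] by simp
    qed
  qed
qed

lemma mult_ann_image:
  assumes c: "\<chi>0 \<in> chars G" and H: "H \<subseteq> carrier G"
  shows "(\<lambda>\<psi> y. \<chi>0 y * \<psi> y) ` annihilator G H = {\<chi> \<in> chars G. \<forall>h\<in>H. \<chi> h = \<chi>0 h}"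
proof
  show "(\<lambda>\<psi> y. \<chi>0 y * \<psi> y) ` annihilator G H \<subseteq> {\<chi> \<in> chars G. \<forall>h\<in>H. \<chi> h = \<chi>0 h}"
    using c chars_prod by (auto simp: annihilator_def)
  show "{\<chi> \<in> chars G. \<forall>h\<in>H. \<chi> h = \<chi>0 h} \<subseteq> (\<lambda>\<psi> y. \<chi>0 y * \<psi> y) ` annihilator G H"
  proof
    fix \<chi> assume \<chi>: "\<chi> \<in> {\<chi> \<in> chars G. \<forall>h\<in>H. \<chi> h = \<chi>0 h}"
    let ?\<psi> = "\<lambda>y. inverse (\<chi>0 y) * \<chi> y"
    have "?\<psi> \<in> chars G" using chars_prod[OF chars_inverse[OF c]] \<chi> by auto
    moreover have "\<forall>h\<in>H. ?\<psi> h = 1" using \<chi> H charsD(2)[OF c] by auto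
    ultimately have "?\<psi> \<in> annihilator G H" by (simp add: annihilator_def)
    moreover have "\<chi> = (\<lambda>y. \<chi>0 y * ?\<psi> y)"
    proof
      fix y show "\<chi> y = \<chi>0 y * ?\<psi> y"
        using charsD(2)[OF c, of y] charsD(3)[of \<chi> G y] \<chi> by (cases "y \<in> carrier G") auto
    qed
    ultimately show "\<chi> \<in> (\<lambda>\<psi> y. \<chi>0 y * \<psi> y) ` annihilator G H"
      using image_eqI[where f="\<lambda>\<psi> y. \<chi>0 y * \<psi> y" and x="?\<psi>"] by blast
  qed
qed

lemma fiber_sum:
  assumes c: "\<chi>0 \<in> chars G" and H: "H \<subseteq> carrier G"
  shows "(\<Sum>\<chi>\<in>{\<chi> \<in> chars G. \<forall>h\<in>H. \<chi> h = \<chi>0 h}. \<chi> x) = \<chi>0 x * (\<Sum>\<psi>\<in>annihilator G H. \<psi> x)"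
proof -
  have inj: "inj_on (\<lambda>\<psi> y. \<chi>0 y * \<psi> y) (annihilator G H)"
    using mult_inj[OF c] by (rule inj_on_subset) (auto simp: annihilator_def)
  have "(\<Sum>\<chi>\<in>{\<chi> \<in> chars G. \<forall>h\<in>H. \<chi> h = \<chi>0 h}. \<chi> x) = (\<Sum>\<chi>\<in>(\<lambda>\<psi> y. \<chi>0 y * \<psi> y) ` annihilator G H. \<chi> x)"
    using mult_ann_image[OF c H] by simp
  also have "\<dots> = (\<Sum>\<psi>\<in>annihilator G H. \<chi>0 x * \<psi> x)"
    by (subst sum.reindex[OF inj]) simp
  finally show ?thesis by (simp add: sum_distrib_left)
qed

lemma (in comm_group) sum_ann_out:
  assumes fin: "finite (carrier G)" and H: "subgroup H G" and g: "g \<in> carrier G" "g \<notin> H"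
  shows "(\<Sum>\<psi>\<in>annihilator G H. \<psi> g) = 0"
proof -
  obtain \<psi>0 where p: "\<psi>0 \<in> annihilator G H" "\<psi>0 g \<noteq> 1" using separate[OF assms] by blast
  have c: "\<psi>0 \<in> chars G" using p by (simp add: annihilator_def)
  have Hc: "H \<subseteq> carrier G" using H by (rule subgroup.subset)
  have "{\<chi> \<in> chars G. \<forall>h\<in>H. \<chi> h = \<psi>0 h} = annihilator G H" using p by (auto simp: annihilator_def)
  then have "(\<Sum>\<psi>\<in>annihilator G H. \<psi> g) = \<psi>0 g * (\<Sum>\<psi>\<in>annihilator G H. \<psi> g)"
    using fiber_sum[OF c Hc, of g] by simp
  then have "(1 - \<psi>0 g) * (\<Sum>\<psi>\<in>annihilator G H. \<psi> g) = 0" by (simp add: algebra_simps)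
  then show ?thesis using p(2) by simp
qed

definition cls :: "('a, 'b) monoid_scheme \<Rightarrow> 'a set set \<Rightarrow> ('a \<Rightarrow> complex) \<Rightarrow> ('a \<Rightarrow> complex) set" where
  "cls G P \<chi> = {\<psi> \<in> chars G. \<forall>B\<in>P. sum \<psi> B = sum \<chi> B}"

lemma dual_part_cls: "dual_part G P = cls G P ` chars G"
  by (simp add: dual_part_def cls_def)

lemma cls_self: "\<chi> \<in> chars G \<Longrightarrow> \<chi> \<in> cls G P \<chi>"
  by (simp add: cls_def)

lemma cls_eq: "\<psi> \<in> cls G P \<chi> \<Longrightarrow> cls G P \<psi> = cls G P \<chi>"
  by (auto simp: cls_def)

lemma kraw_cls:
  assumes "\<chi> \<in> chars G" "B \<in> P" shows "kraw (cls G P \<chi>) B = sum \<chi> B"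
proof -
  have "(SOME \<psi>. \<psi> \<in> cls G P \<chi>) \<in> cls G P \<chi>" using cls_self[OF assms(1), of P] by (auto simp: some_in_eq)
  then show ?thesis using assms(2) by (simp add: kraw_def cls_def)
qed

locale pset = comm_group G for G (structure) +
  fixes H :: "'a set" and P :: "'a set set"
  assumes fin: "finite (carrier G)" and Hsub: "subgroup H G" and Hne: "H \<noteq> carrier G"
    and part: "partition_on H P"
begin

abbreviation "GH \<equiv> G\<lparr>carrier := H\<rparr>"
abbreviation "D \<equiv> carrier G - H"
abbreviation "ann \<equiv> annihilator G H"
abbreviation "\<epsilon> \<equiv> principal G"
abbreviation "\<epsilon>H \<equiv> principal GH"

lemma Hc: "H \<subseteq> carrier G" using Hsub by (rule subgroup.subset)
lemma finH: "finite H" using Hc fin finite_subset by blast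
lemma finD: "finite D" using fin by simp
lemma Dne: "D \<noteq> {}" using Hc Hne by blast
lemma cardH: "card H > 0" using finH subgroup.one_closed[OF Hsub] card_gt_0_iff by blast
lemma cardHG: "card H < card (carrier G)" using Hc Hne fin psubset_card_mono by blast
lemma finP: "finite P" using part finH by (metis finite_UnionD partition_on_def)
lemma blockH: "B \<in> P \<Longrightarrow> B \<subseteq> H" using part by (auto simp: partition_on_def)
lemma finB: "B \<in> P \<Longrightarrow> finite B" using blockH finH finite_subset by blast
lemma GH_group: "group GH" using subgroup.subgroup_is_group[OF Hsub is_group] .
lemma finchars: "finite (chars G)" using finite_chars[OF is_group fin] .
lemma fincharsH: "finite (chars GH)" using finite_chars[OF GH_group] finH by simp
lemma finann: "finite ann" using finchars by (rule finite_subset[rotated]) (auto simp: annihilator_def)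
lemma eps_chars: "\<epsilon> \<in> chars G" using principal_chars[OF is_monoid] .
lemma eps_ann: "\<epsilon> \<in> ann" using eps_chars Hc by (auto simp: annihilator_def principal_def)
lemma epsH_chars: "\<epsilon>H \<in> chars GH" using principal_chars[OF group.is_monoid[OF GH_group]] .

lemma sum_part: fixes f :: "'a \<Rightarrow> 'c::comm_monoid_add" shows "sum f H = (\<Sum>B\<in>P. sum f B)"
proof -
  have "sum f (\<Union>P) = (sum \<circ> sum) f P"
    by (rule sum.Union_disjoint) (use part finB in \<open>auto simp: partition_on_def disjoint_def\<close>)
  then show ?thesis using part by (simp add: partition_on_def)
qed

lemma restr_chars: "\<chi> \<in> chars G \<Longrightarrow> restr \<chi> H \<in> chars GH"
  using Hc charsD[of \<chi> G] subgroup.m_closed[OF Hsub] by (auto simp: chars_upd restr_def subsetD)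

lemma sum_restr: "B \<subseteq> H \<Longrightarrow> sum (restr \<chi> H) B = sum \<chi> B"
  by (intro sum.cong) (auto simp: restr_def)

lemma restr_eps: "\<chi> \<in> chars G \<Longrightarrow> restr \<chi> H = \<epsilon>H \<longleftrightarrow> \<chi> \<in> ann"
  by (auto simp: restr_def principal_upd annihilator_def fun_eq_iff)

lemma sumH_chars: "\<psi> \<in> chars GH \<Longrightarrow> sum \<psi> H = (if \<psi> = \<epsilon>H then of_nat (card H) else 0)"
  using group.sum_char_nonprincipal[OF GH_group, of \<psi>] finH by (auto simp: principal_upd)

lemma sumH: "\<chi> \<in> chars G \<Longrightarrow> sum \<chi> H = (if \<chi> \<in> ann then of_nat (card H) else 0)"
  using sumH_chars[OF restr_chars, of \<chi>] sum_restr[of H \<chi>] restr_eps[of \<chi>] by auto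

lemma sumG: "\<chi> \<in> chars G \<Longrightarrow> sum \<chi> (carrier G) = (if \<chi> = \<epsilon> then of_nat (card (carrier G)) else 0)"
  using sum_char_nonprincipal[OF fin, of \<chi>] sum_principal[OF fin, of G] by auto

lemma sumD: "\<chi> \<in> chars G \<Longrightarrow> sum \<chi> D = (if \<chi> = \<epsilon> then of_nat (card (carrier G)) - of_nat (card H)
      else if \<chi> \<in> ann then - of_nat (card H) else 0)"
  using sum_diff[OF fin Hc, of \<chi>] sumG[of \<chi>] sumH[of \<chi>] eps_ann by auto

lemma sumD_eq: assumes "\<chi> \<in> chars G" "\<psi> \<in> chars G"
  shows "sum \<psi> D = sum \<chi> D \<longleftrightarrow> (\<psi> = \<epsilon> \<longleftrightarrow> \<chi> = \<epsilon>) \<and> (\<psi> \<in> ann \<longleftrightarrow> \<chi> \<in> ann)"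
proof -
  have a: "(of_nat (card (carrier G)) - of_nat (card H) :: complex) \<noteq> - of_nat (card H)"
    using cardHG by simp
  have b: "(of_nat (card (carrier G)) - of_nat (card H) :: complex) \<noteq> 0"
    using cardHG by simp
  have c: "(- of_nat (card H) :: complex) \<noteq> 0" using cardH by simp
  show ?thesis using sumD[OF assms(1)] sumD[OF assms(2)] a b c eps_ann by (auto split: if_splits)
qed

lemma sum_ann_block: "\<chi> \<in> ann \<Longrightarrow> B \<in> P \<Longrightarrow> sum \<chi> B = of_nat (card B)"
  using blockH by (auto simp: annihilator_def subset_iff)

lemma clsH_eps: "cls GH P \<epsilon>H = {\<epsilon>H}"
proof
  show "{\<epsilon>H} \<subseteq> cls GH P \<epsilon>H" using cls_self[OF epsH_chars] by simp
  show "cls GH P \<epsilon>H \<subseteq> {\<epsilon>H}"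
  proof
    fix \<psi> assume p: "\<psi> \<in> cls GH P \<epsilon>H"
    then have "sum \<psi> H = sum \<epsilon>H H" by (simp add: cls_def sum_part)
    then show "\<psi> \<in> {\<epsilon>H}" using sumH_chars[of \<psi>] sumH_chars[OF epsH_chars] cardH p
      by (auto simp: cls_def split: if_splits)
  qed
qed

lemma epsH_notin: assumes "Q \<in> dual_part GH P - {{\<epsilon>H}}" shows "\<epsilon>H \<notin> Q"
proof
  assume e: "\<epsilon>H \<in> Q"
  obtain \<phi> where "\<phi> \<in> chars GH" "Q = cls GH P \<phi>" using assms by (auto simp: dual_part_cls)
  then have "Q = cls GH P \<epsilon>H" using cls_eq e by metis
  then show False using assms clsH_eps by simp
qed

abbreviation "P' \<equiv> insert D P"

lemma cls_G:
  assumes c: "\<chi> \<in> chars G"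
  shows "cls G P' \<chi> = (if \<chi> = \<epsilon> then {\<epsilon>} else if \<chi> \<in> ann then ann - {\<epsilon>}
     else lift_block G H (cls GH P (restr \<chi> H)))"
proof -
  have mem: "\<psi> \<in> cls G P' \<chi> \<longleftrightarrow> \<psi> \<in> chars G \<and> (\<psi> = \<epsilon> \<longleftrightarrow> \<chi> = \<epsilon>) \<and> (\<psi> \<in> ann \<longleftrightarrow> \<chi> \<in> ann)
     \<and> (\<forall>B\<in>P. sum \<psi> B = sum \<chi> B)" for \<psi>
    using sumD_eq[OF c, of \<psi>] by (auto simp: cls_def)
  show ?thesis
  proof (cases "\<chi> = \<epsilon>")
    case True then show ?thesis using mem eps_chars by auto
  next
    case ne: False
    show ?thesis
    proof (cases "\<chi> \<in> ann")
      case True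
      then show ?thesis using mem ne sum_ann_block by (auto simp: annihilator_def)
    next
      case False
      have "\<psi> \<in> cls G P' \<chi> \<longleftrightarrow> \<psi> \<in> lift_block G H (cls GH P (restr \<chi> H))" for \<psi>
        using mem[of \<psi>] False ne eps_ann restr_chars[of \<psi>] sum_restr blockH
        by (auto simp: lift_block_def cls_def annihilator_def)
      then show ?thesis using False ne by auto
    qed
  qed
qed

lemma lift_nonempty_cls:
  assumes "Q \<in> dual_part GH P - {{\<epsilon>H}}" "\<chi> \<in> lift_block G H Q"
  shows "cls G P' \<chi> = lift_block G H Q"
proof -
  obtain \<phi> where phi: "\<phi> \<in> chars GH" "Q = cls GH P \<phi>" using assms(1) by (auto simp: dual_part_cls)
  have c: "\<chi> \<in> chars G" "\<chi> \<notin> ann" "restr \<chi> H \<in> Q" using assms(2) by (auto simp: lift_block_def)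
  then have "cls GH P (restr \<chi> H) = Q" using phi cls_eq by metis
  moreover have "\<chi> \<noteq> \<epsilon>" using c eps_ann by auto
  ultimately show ?thesis using cls_G[OF c(1)] c by simp
qed

lemma DP: "dual_part G P' =
       ({ann - {\<epsilon>}} - {{}}) \<union> {{\<epsilon>}}
       \<union> ((\<lambda>Q. lift_block G H Q) ` (dual_part GH P - {{\<epsilon>H}}) - {{}})"
proof
  show "dual_part G P' \<subseteq> ({ann - {\<epsilon>}} - {{}}) \<union> {{\<epsilon>}}
       \<union> ((\<lambda>Q. lift_block G H Q) ` (dual_part GH P - {{\<epsilon>H}}) - {{}})"
  proof
    fix X assume "X \<in> dual_part G P'"
    then obtain \<chi> where c: "\<chi> \<in> chars G" "X = cls G P' \<chi>" by (auto simp: dual_part_cls)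
    show "X \<in> ({ann - {\<epsilon>}} - {{}}) \<union> {{\<epsilon>}}
       \<union> ((\<lambda>Q. lift_block G H Q) ` (dual_part GH P - {{\<epsilon>H}}) - {{}})"
    proof (cases "\<chi> = \<epsilon>")
      case True then show ?thesis using c cls_G by simp
    next
      case ne: False
      show ?thesis
      proof (cases "\<chi> \<in> ann")
        case True then show ?thesis using c cls_G ne by auto
      next
        case False
        let ?Q = "cls GH P (restr \<chi> H)"
        have r: "restr \<chi> H \<in> chars GH" using restr_chars[OF c(1)] .
        have "?Q \<in> dual_part GH P" using r by (simp add: dual_part_cls)
        moreover have "?Q \<noteq> {\<epsilon>H}" using cls_self[OF r, of P] restr_eps[OF c(1)] False by auto
        moreover have "\<chi> \<in> lift_block G H ?Q" using c False cls_self[OF r, of P] by (simp add: lift_block_def)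
        ultimately show ?thesis using c cls_G ne False by auto
      qed
    qed
  qed
  show "({ann - {\<epsilon>}} - {{}}) \<union> {{\<epsilon>}}
       \<union> ((\<lambda>Q. lift_block G H Q) ` (dual_part GH P - {{\<epsilon>H}}) - {{}}) \<subseteq> dual_part G P'"
  proof
    fix X assume "X \<in> ({ann - {\<epsilon>}} - {{}}) \<union> {{\<epsilon>}}
       \<union> ((\<lambda>Q. lift_block G H Q) ` (dual_part GH P - {{\<epsilon>H}}) - {{}})"
    then consider (a) x where "X = ann - {\<epsilon>}" "x \<in> ann" "x \<noteq> \<epsilon>" | (b) "X = {\<epsilon>}"
      | (c) Q x where "Q \<in> dual_part GH P - {{\<epsilon>H}}" "x \<in> lift_block G H Q" "X = lift_block G H Q"
      by blast
    then show "X \<in> dual_part G P'"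
    proof cases
      case a
      then have "X = cls G P' x" using cls_G[of x] by (simp add: annihilator_def)
      then show ?thesis using a by (auto simp: dual_part_cls annihilator_def)
    next
      case b
      then show ?thesis using cls_G[OF eps_chars] eps_chars by (auto simp: dual_part_cls)
    next
      case c
      then have "X = cls G P' x" using lift_nonempty_cls by auto
      moreover have "x \<in> chars G" using c by (simp add: lift_block_def)
      ultimately show ?thesis by (auto simp: dual_part_cls)
    qed
  qed
qed


lemma some_ann: assumes "ann - {\<epsilon>} \<noteq> {}" shows "(SOME \<chi>. \<chi> \<in> ann - {\<epsilon>}) \<in> ann - {\<epsilon>}"
  by (subst some_in_eq) (rule assms)

lemma part2: "ann - {\<epsilon>} \<noteq> {} \<Longrightarrow> kraw (ann - {\<epsilon>}) D = - of_nat (card H)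
        \<and> (\<forall>B\<in>P. kraw (ann - {\<epsilon>}) B = of_nat (card B))"
proof -
  assume ne: "ann - {\<epsilon>} \<noteq> {}"
  let ?\<chi> = "SOME \<chi>. \<chi> \<in> ann - {\<epsilon>}"
  have c: "?\<chi> \<in> ann" "?\<chi> \<noteq> \<epsilon>" "?\<chi> \<in> chars G" using some_ann[OF ne] by (auto simp: annihilator_def)
  show ?thesis using sumD[OF c(3)] c sum_ann_block[OF c(1)] by (simp add: kraw_def)
qed

lemma part3: "kraw {\<epsilon>} D = of_nat (card D) \<and> (\<forall>B\<in>P. kraw {\<epsilon>} B = kraw {\<epsilon>H} B)"
proof -
  have "kraw {\<epsilon>} D = of_nat (card D)" using sum_principal[OF finD, of G] by (simp add: kraw_def)
  moreover have "kraw {\<epsilon>} B = kraw {\<epsilon>H} B" if "B \<in> P" for B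
    using blockH[OF that] Hc by (auto simp: kraw_def principal_def intro!: sum.cong)
  ultimately show ?thesis by blast
qed

lemma part4: assumes Q: "Q \<in> dual_part GH P - {{\<epsilon>H}}" and ne: "lift_block G H Q \<noteq> {}"
  shows "kraw (lift_block G H Q) D = 0 \<and> (\<forall>B\<in>P. kraw (lift_block G H Q) B = kraw Q B)"
proof -
  let ?\<chi> = "SOME \<chi>. \<chi> \<in> lift_block G H Q"
  have m: "?\<chi> \<in> lift_block G H Q" using ne by (auto simp: some_in_eq)
  then have c: "?\<chi> \<in> chars G" "?\<chi> \<notin> ann" "restr ?\<chi> H \<in> Q" by (auto simp: lift_block_def)
  obtain \<phi> where phi: "\<phi> \<in> chars GH" "Q = cls GH P \<phi>" using Q by (auto simp: dual_part_cls)
  have "kraw (lift_block G H Q) D = 0" using sumD[OF c(1)] c(2) eps_ann by (auto simp: kraw_def)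
  moreover have "kraw (lift_block G H Q) B = kraw Q B" if B: "B \<in> P" for B
  proof -
    have "kraw (lift_block G H Q) B = sum ?\<chi> B" by (simp add: kraw_def)
    also have "\<dots> = sum (restr ?\<chi> H) B" using sum_restr[OF blockH[OF B]] by simp
    also have "\<dots> = sum \<phi> B" using c(3) phi B by (auto simp: cls_def)
    also have "\<dots> = kraw Q B" using kraw_cls[OF phi(1) B] phi by simp
    finally show ?thesis .
  qed
  ultimately show ?thesis by blast
qed

lemma ann_ne: "ann - {\<epsilon>} \<noteq> {}"
proof -
  obtain g where g: "g \<in> carrier G" "g \<notin> H" using Dne by blast
  obtain \<psi> where "\<psi> \<in> ann" "\<psi> g \<noteq> 1" using separate[OF fin Hsub g] by blast
  moreover have "\<epsilon> g = 1" using g by (simp add: principal_def)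
  ultimately show ?thesis by auto
qed

lemma card_ann: "card ann > 0" using finann eps_ann card_gt_0_iff by blast

lemma sum_ann_in: "x \<in> H \<Longrightarrow> (\<Sum>\<psi>\<in>ann. \<psi> x) = of_nat (card ann)"
  by (simp add: annihilator_def)

lemma S_eps: "x \<in> carrier G \<Longrightarrow> (\<Sum>\<chi>\<in>{\<epsilon>}. \<chi> x) = 1"
  by (simp add: principal_def)

lemma S_ann: "x \<in> carrier G \<Longrightarrow> (\<Sum>\<chi>\<in>ann - {\<epsilon>}. \<chi> x) = (if x \<in> H then of_nat (card ann) - 1 else - 1)"
  using sum_diff1[OF finann, of "\<lambda>\<chi>. \<chi> x" \<epsilon>] eps_ann sum_ann_in[of x] sum_ann_out[OF fin Hsub, of x]
  by (simp add: principal_def)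

lemma Q_chars: "Q \<in> dual_part GH P \<Longrightarrow> Q \<subseteq> chars GH"
  by (auto simp: dual_part_cls cls_def)

lemma lift_eq: assumes Q: "Q \<in> dual_part GH P - {{\<epsilon>H}}"
  shows "lift_block G H Q = {\<chi> \<in> chars G. restr \<chi> H \<in> Q}"
  by (auto simp: lift_block_def) (metis epsH_notin[OF Q] restr_eps)

lemma lift_ne: assumes Q: "Q \<in> dual_part GH P - {{\<epsilon>H}}" shows "lift_block G H Q \<noteq> {}"
proof -
  obtain \<phi> where phi: "\<phi> \<in> chars GH" "Q = cls GH P \<phi>" using Q by (auto simp: dual_part_cls)
  obtain \<chi>0 where c0: "\<chi>0 \<in> chars G" "\<forall>h\<in>H. \<chi>0 h = \<phi> h" using ext_all[OF fin Hsub phi(1)] by blast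
  have "restr \<chi>0 H = \<phi>" using c0 phi(1) by (auto simp: restr_def chars_upd fun_eq_iff)
  then have "\<chi>0 \<in> lift_block G H Q" using lift_eq[OF Q] c0 cls_self[OF phi(1), of P] phi by simp
  then show ?thesis by blast
qed

lemma S_lift: assumes Q: "Q \<in> dual_part GH P - {{\<epsilon>H}}" and x: "x \<in> carrier G"
  shows "(\<Sum>\<chi>\<in>lift_block G H Q. \<chi> x) = (if x \<in> H then of_nat (card ann) * (\<Sum>\<phi>\<in>Q. \<phi> x) else 0)"
proof -
  let ?L = "{\<chi> \<in> chars G. restr \<chi> H \<in> Q}"
  have QC: "Q \<subseteq> chars GH" using Q Q_chars by blast
  have finQ: "finite Q" using QC fincharsH finite_subset by blast
  have finL: "finite ?L" using finchars by simp
  have "(\<Sum>\<chi>\<in>lift_block G H Q. \<chi> x) = (\<Sum>\<chi>\<in>?L. \<chi> x)" using lift_eq[OF Q] by simp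
  also have "\<dots> = (\<Sum>\<phi>\<in>Q. \<Sum>\<chi>\<in>{\<chi>. \<chi> \<in> ?L \<and> restr \<chi> H = \<phi>}. \<chi> x)"
    by (rule sum.group[symmetric]) (use finL finQ in auto)
  also have "\<dots> = (\<Sum>\<phi>\<in>Q. if x \<in> H then of_nat (card ann) * \<phi> x else 0)"
  proof (rule sum.cong[OF refl])
    fix \<phi> assume p: "\<phi> \<in> Q"
    then have phi: "\<phi> \<in> chars GH" using QC by blast
    obtain \<chi>0 where c0: "\<chi>0 \<in> chars G" "\<forall>h\<in>H. \<chi>0 h = \<phi> h" using ext_all[OF fin Hsub phi] by blast
    have "{\<chi>. \<chi> \<in> ?L \<and> restr \<chi> H = \<phi>} = {\<chi> \<in> chars G. \<forall>h\<in>H. \<chi> h = \<chi>0 h}"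
    proof -
      have eq: "restr \<chi> H = \<phi> \<longleftrightarrow> (\<forall>h\<in>H. \<chi> h = \<chi>0 h)" for \<chi>
        using c0(2) phi by (auto simp: restr_def chars_upd fun_eq_iff)

      show ?thesis
      proof (rule Set.set_eqI)
        fix \<chi> show "\<chi> \<in> {\<chi>. \<chi> \<in> ?L \<and> restr \<chi> H = \<phi>} \<longleftrightarrow> \<chi> \<in> {\<chi> \<in> chars G. \<forall>h\<in>H. \<chi> h = \<chi>0 h}"
          using eq[of \<chi>] p by auto
      qed
    qed
    then have "(\<Sum>\<chi>\<in>{\<chi>. \<chi> \<in> ?L \<and> restr \<chi> H = \<phi>}. \<chi> x) = \<chi>0 x * (\<Sum>\<psi>\<in>ann. \<psi> x)"
      using fiber_sum[OF c0(1) Hc, of x] by simp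
    also have "\<dots> = (if x \<in> H then of_nat (card ann) * \<phi> x else 0)"
      using sum_ann_in[of x] sum_ann_out[OF fin Hsub x] c0(2) by auto
    finally show "(\<Sum>\<chi>\<in>{\<chi>. \<chi> \<in> ?L \<and> restr \<chi> H = \<phi>}. \<chi> x) = (if x \<in> H then of_nat (card ann) * \<phi> x else 0)" .
  qed
  also have "\<dots> = (if x \<in> H then of_nat (card ann) * (\<Sum>\<phi>\<in>Q. \<phi> x) else 0)"
    by (simp add: sum_distrib_left)
  finally show ?thesis .
qed

lemma cond:
  assumes g: "g \<in> carrier G" and h: "h \<in> carrier G"
  shows "(\<forall>Q'\<in>dual_part G P'. (\<Sum>\<chi>\<in>Q'. \<chi> h) = (\<Sum>\<chi>\<in>Q'. \<chi> g)) \<longleftrightarrow>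
     (h \<in> H \<longleftrightarrow> g \<in> H) \<and> (g \<in> H \<longrightarrow> (\<forall>Q\<in>dual_part GH P - {{\<epsilon>H}}. (\<Sum>\<phi>\<in>Q. \<phi> h) = (\<Sum>\<phi>\<in>Q. \<phi> g)))"
proof
  assume A: "\<forall>Q'\<in>dual_part G P'. (\<Sum>\<chi>\<in>Q'. \<chi> h) = (\<Sum>\<chi>\<in>Q'. \<chi> g)"
  have "ann - {\<epsilon>} \<in> dual_part G P'" using DP ann_ne by auto
  then have e: "(\<Sum>\<chi>\<in>ann - {\<epsilon>}. \<chi> h) = (\<Sum>\<chi>\<in>ann - {\<epsilon>}. \<chi> g)" using A by blast
  have cne: "(of_nat (card ann) :: complex) \<noteq> 0" using card_ann by simp
  have 1: "h \<in> H \<longleftrightarrow> g \<in> H" using e S_ann[OF g] S_ann[OF h] cne by (auto split: if_splits)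
  moreover have "(\<Sum>\<phi>\<in>Q. \<phi> h) = (\<Sum>\<phi>\<in>Q. \<phi> g)" if gH: "g \<in> H" and Q: "Q \<in> dual_part GH P - {{\<epsilon>H}}" for Q
  proof -
    have "lift_block G H Q \<in> dual_part G P'" using DP lift_ne[OF Q] Q by auto
    then have "(\<Sum>\<chi>\<in>lift_block G H Q. \<chi> h) = (\<Sum>\<chi>\<in>lift_block G H Q. \<chi> g)" using A by blast
    then show ?thesis using S_lift[OF Q g] S_lift[OF Q h] gH 1 cne by simp
  qed
  ultimately show "(h \<in> H \<longleftrightarrow> g \<in> H) \<and> (g \<in> H \<longrightarrow> (\<forall>Q\<in>dual_part GH P - {{\<epsilon>H}}. (\<Sum>\<phi>\<in>Q. \<phi> h) = (\<Sum>\<phi>\<in>Q. \<phi> g)))"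
    by blast
next
  assume B: "(h \<in> H \<longleftrightarrow> g \<in> H) \<and> (g \<in> H \<longrightarrow> (\<forall>Q\<in>dual_part GH P - {{\<epsilon>H}}. (\<Sum>\<phi>\<in>Q. \<phi> h) = (\<Sum>\<phi>\<in>Q. \<phi> g)))"
  show "\<forall>Q'\<in>dual_part G P'. (\<Sum>\<chi>\<in>Q'. \<chi> h) = (\<Sum>\<chi>\<in>Q'. \<chi> g)"
  proof
    fix Q' assume "Q' \<in> dual_part G P'"
    then consider (a) "Q' = ann - {\<epsilon>}" | (b) "Q' = {\<epsilon>}"
      | (c) Q where "Q \<in> dual_part GH P - {{\<epsilon>H}}" "Q' = lift_block G H Q"
      using DP by blast
    then show "(\<Sum>\<chi>\<in>Q'. \<chi> h) = (\<Sum>\<chi>\<in>Q'. \<chi> g)"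
    proof cases
      case a then show ?thesis using S_ann[OF g] S_ann[OF h] B by simp
    next
      case b then show ?thesis using S_eps[OF g] S_eps[OF h] by simp
    next
      case c then show ?thesis using S_lift[OF c(1) g] S_lift[OF c(1) h] B by auto
    qed
  qed
qed

lemma SH_eps: "x \<in> H \<Longrightarrow> (\<Sum>\<phi>\<in>{\<epsilon>H}. \<phi> x) = 1"
  by (simp add: principal_upd)

lemma epsH_dual: "{\<epsilon>H} \<in> dual_part GH P"
  using clsH_eps epsH_chars by (auto simp: dual_part_cls)

lemma part5: assumes R: "reflexive_part GH P" shows "reflexive_part G P'"
proof -
  define C where "C g = {h \<in> carrier G. \<forall>Q'\<in>dual_part G P'. (\<Sum>\<chi>\<in>Q'. \<chi> h) = (\<Sum>\<chi>\<in>Q'. \<chi> g)}" for g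
  define CH where "CH g = {h \<in> H. \<forall>Q\<in>dual_part GH P. (\<Sum>\<phi>\<in>Q. \<phi> h) = (\<Sum>\<phi>\<in>Q. \<phi> g)}" for g
  have bG: "bidual_part G P' = C ` carrier G" by (simp add: bidual_part_def C_def)
  have bH: "CH ` H = P" using R by (simp add: reflexive_part_def bidual_part_def CH_def)
  have CD: "C g = D" if g: "g \<in> D" for g
    using cond[of g] g by (auto simp: C_def)
  have CHH: "C g = CH g" if g: "g \<in> H" for g
  proof -
    have "h \<in> C g \<longleftrightarrow> h \<in> CH g" for h
    proof (cases "h \<in> carrier G")
      case True
      have "(\<forall>Q\<in>dual_part GH P. (\<Sum>\<phi>\<in>Q. \<phi> h) = (\<Sum>\<phi>\<in>Q. \<phi> g)) \<longleftrightarrow>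
            (\<forall>Q\<in>dual_part GH P - {{\<epsilon>H}}. (\<Sum>\<phi>\<in>Q. \<phi> h) = (\<Sum>\<phi>\<in>Q. \<phi> g))" if "h \<in> H"
        using SH_eps[OF that] SH_eps[OF g] by auto
      then show ?thesis using cond[OF _ True, of g] g Hc True by (auto simp: C_def CH_def)
    next
      case False then show ?thesis using Hc by (auto simp: C_def CH_def)
    qed
    then show ?thesis by blast
  qed
  have "carrier G = D \<union> H" using Hc by blast
  then have "C ` carrier G = C ` (D \<union> H)" by (rule arg_cong[where f="image C"])
  also have "\<dots> = C ` D \<union> C ` H" by (rule image_Un)
  also have "C ` D = {D}" using CD Dne by auto
  also have "C ` H = CH ` H" using CHH by simp
  finally show ?thesis using bG bH by (simp add: reflexive_part_def)
qed

end

theorem proposition2p12: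
  fixes G :: "('a, 'b) monoid_scheme" and H :: "'a set" and P :: "'a set set"
  assumes "comm_group G" and "finite (carrier G)"
    and "subgroup H G" and "H \<noteq> carrier G"
    and "partition_on H P"
  shows
    "(dual_part G (insert (carrier G - H) P) =
       ({annihilator G H - {principal G}} - {{}})
       \<union> {{principal G}}
       \<union> ((\<lambda>Q. lift_block G H Q) ` (dual_part (G\<lparr>carrier := H\<rparr>) P - {{principal (G\<lparr>carrier := H\<rparr>)}}) - {{}}))
  \<and> (annihilator G H - {principal G} \<noteq> {} \<longrightarrow>
       kraw (annihilator G H - {principal G}) (carrier G - H) = - of_nat (card H)
       \<and> (\<forall>B\<in>P. kraw (annihilator G H - {principal G}) B = of_nat (card B)))
  \<and> (kraw {principal G} (carrier G - H) = of_nat (card (carrier G - H))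
     \<and> (\<forall>B\<in>P. kraw {principal G} B = kraw {principal (G\<lparr>carrier := H\<rparr>)} B))
  \<and> (\<forall>Q\<in>dual_part (G\<lparr>carrier := H\<rparr>) P - {{principal (G\<lparr>carrier := H\<rparr>)}}.
       lift_block G H Q \<noteq> {} \<longrightarrow>
         kraw (lift_block G H Q) (carrier G - H) = 0
         \<and> (\<forall>B\<in>P. kraw (lift_block G H Q) B = kraw Q B))
  \<and> (reflexive_part (G\<lparr>carrier := H\<rparr>) P \<longrightarrow>
       reflexive_part G (insert (carrier G - H) P))"
proof -
  have "pset G H P" using assms by (simp add: pset_def pset_axioms_def)
  then interpret pset G H P .
  show ?thesis using DP part2 part3 part4 part5 by blast
qed

end
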